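(* Let $q$ be an odd prime power. If $\{x_k\}_{k\in[n]}$ in $\mathbb{F}_{q^2}^d$ is an $(a,c_1,c_2)$-projective $2$-design for some $a,c_1,c_2\in\mathbb{F}_q$, then $n\ge d^2$.
   Context: For $a\in\mathbb{F}_{q^2}$ write $\overline{a}=a^q$; $A^*$ is conjugate transpose; $\langle x,y\rangle=x^*y$ on $\mathbb{F}_{q^2}^d$ and analogously on $(\mathbb{F}_{q^2}^d)^{\otimes 2}$. For a nondegenerate subspace $V$ (i.e. $V\cap V^\perp=\{0\}$), a family $\{y_k\}_{k\in[n]}$ in $V$ is a $c$-tight frame for $V$ ($c\in\mathbb{F}_q$) if $\operatorname{span}\{y_k\}=V$ and $\sum_k\langle y_k,y\rangle y_k=cy$ for all $y\in V$. $(\mathbb{F}_{q^2}^d)^{\otimes2}_{\mathrm{sym}}=\{\sum_{i,j}c_{ij}e_i\otimes e_j:c_{ij}=c_{ji}\}$ is nondegenerate with orthogonal projection $\Pi_d^{(2)}=\frac12\sum_{i,j}(e_ie_i^*\otimes e_je_j^*+e_ie_j^*\otimes e_je_i^* )$. A family $\{x_k\}_{k\in[n]}$ in $\mathbb{F}_{q^2}^d$ is an $(a,c_1,c_2)$-projective $2$-design ($a,c_1,c_2\in\mathbb{F}_q$) if (i) $\langle x_k,x_k\rangle=a$ for all $k$, (ii) $\{x_k\}$ is a $c_1$-tight frame for $\mathbb{F}_{q^2}^d$, and (iii) $\{x_k\otimes x_k\}$ is a $c_2$-tight frame for $(\mathbb{F}_{q^2}^d)^{\otimes 2}_{\mathrm{sym}}$.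 *)

theory Defs
  imports "HOL-Computational_Algebra.Primes"
begin

text \<open>The field F_{q^2} is a type 'a::field with q^2 elements; conjugation is a \<mapsto> a^q,
  and F_q is the fixed field {a. a^q = a}. Vectors in F_{q^2}^d are functions 'i \<Rightarrow> 'a
  on a finite index type 'i with d = CARD('i); tensors in (F^d)^{\<otimes>2} are functions on
  'i \<times> 'i (coefficients w.r.t. e_i \<otimes> e_j).\<close>

definition conj_q :: "nat \<Rightarrow> 'a::field \<Rightarrow> 'a" where
  "conj_q q a = a ^ q"

definition in_Fq :: "nat \<Rightarrow> 'a::field \<Rightarrow> bool" where
  "in_Fq q a \<longleftrightarrow> conj_q q a = a"

definition hinner :: "nat \<Rightarrow> ('i::finite \<Rightarrow> 'a::field) \<Rightarrow> ('i \<Rightarrow> 'a) \<Rightarrow> 'a" where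
  "hinner q x y = (\<Sum>i\<in>UNIV. conj_q q (x i) * y i)"

definition fam_span :: "nat \<Rightarrow> (nat \<Rightarrow> ('i \<Rightarrow> 'a::field)) \<Rightarrow> ('i \<Rightarrow> 'a) set" where
  "fam_span n y = {v. \<exists>c::nat \<Rightarrow> 'a. v = (\<lambda>i. \<Sum>k<n. c k * y k i)}"

definition tight_frame ::
  "nat \<Rightarrow> 'a::field \<Rightarrow> nat \<Rightarrow> (nat \<Rightarrow> ('i::finite \<Rightarrow> 'a)) \<Rightarrow> ('i \<Rightarrow> 'a) set \<Rightarrow> bool" where
  "tight_frame q c n y V \<longleftrightarrow>
     (\<forall>k<n. y k \<in> V) \<and> fam_span n y = V \<and>
     (\<forall>v\<in>V. (\<lambda>i. \<Sum>k<n. hinner q (y k) v * y k i) = (\<lambda>i. c * v i))"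

definition tensor2 :: "('i \<Rightarrow> 'a::field) \<Rightarrow> ('i \<times> 'i \<Rightarrow> 'a)" where
  "tensor2 x = (\<lambda>(i, j). x i * x j)"

definition sym_tensors :: "('i \<times> 'i \<Rightarrow> 'a) set" where
  "sym_tensors = {T. \<forall>i j. T (i, j) = T (j, i)}"

definition projective_2_design ::
  "nat \<Rightarrow> 'a::field \<Rightarrow> 'a \<Rightarrow> 'a \<Rightarrow> nat \<Rightarrow> (nat \<Rightarrow> ('i::finite \<Rightarrow> 'a)) \<Rightarrow> bool" where
  "projective_2_design q a c1 c2 n x \<longleftrightarrow>
     in_Fq q a \<and> in_Fq q c1 \<and> in_Fq q c2 \<and>
     (\<forall>k<n. hinner q (x k) (x k) = a) \<and>
     tight_frame q c1 n x UNIV \<and>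
     tight_frame q c2 n (\<lambda>k. tensor2 (x k)) sym_tensors"

end

theory Submission imports Defs "HOL-Number_Theory.Residues" "HOL-Library.Cardinality" begin

lemma card_P0:
  "card {c::nat \<Rightarrow> 'a::zero. \<forall>k\<ge>n. c k = 0} = card (UNIV::'a set) ^ n"
proof -
  have "bij_betw (\<lambda>c. restrict c {..<n}) {c::nat \<Rightarrow> 'a::zero. \<forall>k\<ge>n. c k = 0} ({..<n} \<rightarrow>\<^sub>E (UNIV::'a set))"
    unfolding bij_betw_def
  proof
    show "inj_on (\<lambda>c. restrict c {..<n}) {c::nat \<Rightarrow> 'a::zero. \<forall>k\<ge>n. c k = 0}"
    proof (rule inj_onI)
      fix c d assume cd: "c \<in> {c::nat \<Rightarrow> 'a::zero. \<forall>k\<ge>n. c k = 0}" "d \<in> {c::nat \<Rightarrow> 'a::zero. \<forall>k\<ge>n. c k = 0}"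
        and eq: "restrict c {..<n} = restrict d {..<n}"
      show "c = d"
      proof
        fix k show "c k = d k"
        proof (cases "k < n")
          case True then show ?thesis using fun_cong[OF eq, of k] by simp
        next
          case False then show ?thesis using cd by auto
        qed
      qed
    qed
    show "(\<lambda>c. restrict c {..<n}) ` {c::nat \<Rightarrow> 'a::zero. \<forall>k\<ge>n. c k = 0} = {..<n} \<rightarrow>\<^sub>E UNIV"
    proof (intro equalityI subsetI)
      fix g assume "g \<in> (\<lambda>c. restrict c {..<n}) ` {c::nat \<Rightarrow> 'a::zero. \<forall>k\<ge>n. c k = 0}"
      then show "g \<in> {..<n} \<rightarrow>\<^sub>E (UNIV::'a set)" by (auto split: if_splits)
    next
      fix g assume "g \<in> {..<n} \<rightarrow>\<^sub>E (UNIV::'a set)"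
      then have "g = restrict (\<lambda>k. if k < n then g k else 0) {..<n}"
        by (auto simp: PiE_def extensional_def restrict_def)
      then show "g \<in> (\<lambda>c. restrict c {..<n}) ` {c::nat \<Rightarrow> 'a::zero. \<forall>k\<ge>n. c k = 0}"
        by (intro image_eqI[where x="\<lambda>k. if k < n then g k else 0"]) auto
    qed
  qed
  then have "card {c::nat \<Rightarrow> 'a::zero. \<forall>k\<ge>n. c k = 0} = card ({..<n} \<rightarrow>\<^sub>E (UNIV::'a set))"
    by (rule bij_betw_same_card)
  also have "\<dots> = card (UNIV::'a set) ^ n" by (simp add: card_funcsetE)
  finally show ?thesis .
qed

lemma card_mat: "card (UNIV :: ('d::finite \<times> 'd \<Rightarrow> 'a) set) = card (UNIV::'a set) ^ (card (UNIV::'d set) ^ 2)"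
proof -
  have d0: "CARD('d) > 0" by (rule finite_UNIV_card_ge_0) simp
  show ?thesis
    using card_fun[where 'a="'d\<times>'d" and 'b='a] d0
    by (cases "CARD('a) = 0") (auto simp: card_prod power2_eq_square)
qed

lemma char_facts:
  fixes q :: nat
  assumes "\<exists>p m. prime p \<and> m > 0 \<and> q = p ^ m" "odd q" "card (UNIV :: 'a::field set) = q ^ 2"
  shows "\<forall>x y::'a. (x + y) ^ q = x ^ q + y ^ q" "(2::'a) \<noteq> 0"
proof -
  obtain p m where pm: "prime p" "m > 0" "q = p ^ m" using assms(1) by blast
  have fin: "finite (UNIV :: 'a set)" using assms(3) pm 
    by (metis card.infinite nat_less_le nat_zero_less_power_iff pos2 power_not_zero prime_gt_0_nat)
  have cp: "CHAR('a) > 0" using finite_imp_CHAR_pos[OF fin] .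
  have pr: "prime CHAR('a)" using prime_CHAR_semidom[OF cp] .
  have "CHAR('a) dvd p ^ (2*m)" using CHAR_dvd_CARD[where 'a='a] assms(3) pm by (simp add: power_mult_distrib power_mult[symmetric] mult.commute)
  then have "CHAR('a) dvd p" using pr prime_dvd_power by blast
  then have cp2: "CHAR('a) = p" using pr pm(1) by (simp add: primes_dvd_imp_eq)
  show "\<forall>x y::'a. (x + y) ^ q = x ^ q + y ^ q"
    using freshmans_dream'[OF pr, of q m] pm cp2 by auto
  show "(2::'a) \<noteq> 0"
  proof
    assume "(2::'a) = 0"
    then have "of_nat 2 = (0::'a)" by simp
    then have "CHAR('a) dvd 2" by (simp only: of_nat_eq_0_iff_char_dvd)
    then have "p = 2" using cp2 pm(1) by (metis prime_nat_iff two_is_prime_nat primes_dvd_imp_eq)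
    then show False using assms(2) pm by simp
  qed
qed
lemma mult_delta_left: "(if P then 1 else 0) * a = (if P then a else (0::'a::semiring_1))"
  by simp

lemma mult_delta_right: "a * (if P then 1 else 0) = (if P then a else (0::'a::semiring_1))"
  by simp

lemma sum_delta_helper:
  fixes A :: "'d::finite \<times> 'd \<Rightarrow> 'a::comm_ring_1"
  shows "(\<Sum>l\<in>UNIV. \<Sum>j\<in>UNIV. if i = l \<and> j = m then A (l,j) else 0) = A (i,m)"
    "(\<Sum>l\<in>UNIV. \<Sum>j\<in>UNIV. if i = m \<and> j = l then A (l,j) else 0) = (if i = m then (\<Sum>l\<in>UNIV. A (l,l)) else 0)"
proof -
  have "(\<Sum>j\<in>UNIV. if i = l \<and> j = m then A (l,j) else 0) = (if l = i then A (i,m) else 0)" for l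
    by (cases "l = i") auto
  then show "(\<Sum>l\<in>UNIV. \<Sum>j\<in>UNIV. if i = l \<and> j = m then A (l,j) else 0) = A (i,m)" by simp
  have "(\<Sum>j\<in>UNIV. if i = m \<and> j = l then A (l,j) else 0) = (if i = m then A (l,l) else 0)" for l
    by (cases "i = m") auto
  then show "(\<Sum>l\<in>UNIV. \<Sum>j\<in>UNIV. if i = m \<and> j = l then A (l,j) else 0) = (if i = m then (\<Sum>l\<in>UNIV. A (l,l)) else 0)" by simp
qed

lemma delta_aux: "a * (c * ((if P then 1 else 0) + (if Q then 1 else 0))) = c * ((if P then a else 0) + (if Q then a else (0::'a::comm_ring_1)))"
  by (cases P; cases Q) (simp_all add: algebra_simps)

lemma S_ident:
  fixes x :: "nat \<Rightarrow> ('d::finite \<Rightarrow> 'a::field)"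
  assumes q: "q > 0" and tf: "tight_frame q c2 n (\<lambda>k. tensor2 (x k)) sym_tensors"
  shows "(\<Sum>k<n. 2 * (conj_q q (x k l) * conj_q q (x k m)) * (x k i * x k j))
       = c2 * ((if i = l \<and> j = m then 1 else 0) + (if i = m \<and> j = l then 1 else 0))"
proof -
  define v :: "'d\<times>'d \<Rightarrow> 'a" where "v = (\<lambda>p. (if p = (l,m) then 1 else 0) + (if p = (m,l) then 1 else 0))"
  have "v (i',j') = v (j',i')" for i' j'
    unfolding v_def by (cases "i' = l"; cases "j' = m"; cases "i' = m"; cases "j' = l") simp_all
  then have vs: "v \<in> sym_tensors" unfolding sym_tensors_def by blast
  have hk: "hinner q (tensor2 (x k)) v = 2 * (conj_q q (x k l) * conj_q q (x k m))" for k
  proof -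
    have "hinner q (tensor2 (x k)) v = (\<Sum>p\<in>UNIV. conj_q q (tensor2 (x k) p) * (if p = (l,m) then 1 else 0))
         + (\<Sum>p\<in>UNIV. conj_q q (tensor2 (x k) p) * (if p = (m,l) then 1 else 0))"
      unfolding hinner_def v_def by (simp add: distrib_left sum.distrib)
    also have "\<dots> = conj_q q (tensor2 (x k) (l,m)) + conj_q q (tensor2 (x k) (m,l))"
      by (simp only: mult_delta_right sum.delta sum.delta' if_True UNIV_I finite)
    also have "\<dots> = 2 * (conj_q q (x k l) * conj_q q (x k m))"
      unfolding tensor2_def conj_q_def power_mult_distrib by (simp add: mult.commute power_mult_distrib)
    finally show ?thesis .
  qed
  from tf vs have "(\<lambda>ij. \<Sum>k<n. hinner q (tensor2 (x k)) v * tensor2 (x k) ij) = (\<lambda>ij. c2 * v ij)"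
    unfolding tight_frame_def by blast
  from fun_cong[OF this, of "(i,j)"]
  have e: "(\<Sum>k<n. hinner q (tensor2 (x k)) v * tensor2 (x k) (i,j)) = c2 * v (i,j)" by simp
  have e1: "(\<Sum>k<n. hinner q (tensor2 (x k)) v * tensor2 (x k) (i,j)) = (\<Sum>k<n. 2 * (conj_q q (x k l) * conj_q q (x k m)) * (x k i * x k j))"
    unfolding hk by (simp add: tensor2_def)
  have e2: "v (i,j) = ((if i = l \<and> j = m then 1 else 0) + (if i = m \<and> j = l then 1 else 0))"
    by (simp add: v_def)
  show ?thesis using e unfolding e1 e2 by assumption
qed

lemma I_ident:
  fixes x :: "nat \<Rightarrow> ('d::finite \<Rightarrow> 'a::field)"
  assumes q: "q > 0" and tf: "tight_frame q c2 n (\<lambda>k. tensor2 (x k)) sym_tensors"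
  shows "2 * (\<Sum>k<n. (\<Sum>l\<in>UNIV. \<Sum>j\<in>UNIV. conj_q q (x k l) * A (l,j) * x k j) * (x k i * conj_q q (x k m)))
       = c2 * (A (i,m) + (if i = m then (\<Sum>l\<in>UNIV. A (l,l)) else 0))"
proof -
  define F where "F = (\<lambda>k l j. A (l,j) * (2 * (conj_q q (x k l) * conj_q q (x k m)) * (x k i * x k j)))"
  have "2 * (\<Sum>k<n. (\<Sum>l\<in>UNIV. \<Sum>j\<in>UNIV. conj_q q (x k l) * A (l,j) * x k j) * (x k i * conj_q q (x k m)))
      = (\<Sum>k<n. \<Sum>l\<in>UNIV. \<Sum>j\<in>UNIV. 2 * ((conj_q q (x k l) * A (l,j) * x k j) * (x k i * conj_q q (x k m))))"
    by (simp only: sum_distrib_left sum_distrib_right)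
  also have "\<dots> = (\<Sum>k<n. \<Sum>l\<in>UNIV. \<Sum>j\<in>UNIV. F k l j)"
    unfolding F_def by (intro sum.cong refl) (simp only: mult_ac)
  also have "\<dots> = (\<Sum>l\<in>UNIV. \<Sum>k<n. \<Sum>j\<in>UNIV. F k l j)" by (rule sum.swap)
  also have "\<dots> = (\<Sum>l\<in>UNIV. \<Sum>j\<in>UNIV. \<Sum>k<n. F k l j)" by (rule sum.cong[OF refl], rule sum.swap)
  also have "\<dots> = (\<Sum>l\<in>UNIV. \<Sum>j\<in>UNIV. A (l,j) * (c2 * ((if i = l \<and> j = m then 1 else 0) + (if i = m \<and> j = l then 1 else 0))))"
    unfolding F_def sum_distrib_left[symmetric] S_ident[OF q tf] by (rule refl)
  also have "\<dots> = (\<Sum>l\<in>UNIV. \<Sum>j\<in>UNIV. c2 * ((if i = l \<and> j = m then A (l,j) else 0) + (if i = m \<and> j = l then A (l,j) else 0)))"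
    by (intro sum.cong refl) (rule delta_aux)
  also have "\<dots> = c2 * ((\<Sum>l\<in>UNIV. \<Sum>j\<in>UNIV. if i = l \<and> j = m then A (l,j) else 0) + (\<Sum>l\<in>UNIV. \<Sum>j\<in>UNIV. if i = m \<and> j = l then A (l,j) else 0))"
    by (simp only: sum_distrib_left[symmetric] sum.distrib)
  also have "\<dots> = c2 * (A (i,m) + (if i = m then (\<Sum>l\<in>UNIV. A (l,l)) else 0))"
    by (simp only: sum_delta_helper)
  finally show ?thesis .
qed

lemma finite_of_card_pos: "card A > 0 \<Longrightarrow> finite A"
  using card.infinite by fastforce

lemma sym_sq:
  assumes fin: "finite (UNIV :: ('d::finite \<times> 'd \<Rightarrow> 'a) set)"
  shows "card (UNIV :: ('d \<times> 'd \<Rightarrow> 'a) set) \<le> card (sym_tensors :: ('d \<times> 'd \<Rightarrow> 'a) set) * card (sym_tensors :: ('d \<times> 'd \<Rightarrow> 'a) set)"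
proof -
  have fd: "finite (UNIV :: 'd set)" by simp
  obtain r :: "'d \<Rightarrow> nat" and N where rN: "r ` UNIV = {i. i < N}" "inj_on r UNIV"
    using finite_imp_inj_to_nat_seg[OF fd] by blast
  have r: "i = j" if "r i = r j" for i j using rN(2) that unfolding inj_on_def by blast
  define h where "h = (\<lambda>A :: 'd \<times> 'd \<Rightarrow> 'a. ((\<lambda>(i,j). if r i \<le> r j then A (i,j) else A (j,i)),
                                             (\<lambda>(i,j). if r i \<le> r j then A (j,i) else A (i,j))))"
  have "inj_on h UNIV"
  proof (rule inj_onI)
    fix A B assume e: "h A = h B"
    show "A = B"
    proof
      fix p :: "'d \<times> 'd"
      obtain i j where p: "p = (i,j)" by (cases p) blast
      have e1: "(if r i \<le> r j then A (i,j) else A (j,i)) = (if r i \<le> r j then B (i,j) else B (j,i))"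
        using fun_cong[OF arg_cong[OF e, of fst], of "(i,j)"] unfolding h_def fst_conv prod.case .
      have e2: "(if r i \<le> r j then A (j,i) else A (i,j)) = (if r i \<le> r j then B (j,i) else B (i,j))"
        using fun_cong[OF arg_cong[OF e, of snd], of "(i,j)"] unfolding h_def snd_conv prod.case .
      show "A p = B p"
      proof (cases "r i \<le> r j")
        case True
        then have "A (i,j) = B (i,j)" using e1 by (simp only: if_True)
        then show ?thesis using p by (simp only:)
      next
        case False
        then have "A (i,j) = B (i,j)" using e2 by (simp only: if_False)
        then show ?thesis using p by (simp only:)
      qed
    qed
  qed
  moreover have "h ` UNIV \<subseteq> sym_tensors \<times> sym_tensors"
  proof
    fix T assume "T \<in> h ` UNIV"
    then obtain A where T: "T = h A" by blast
    have s1: "(if r i \<le> r j then A (i,j) else A (j,i)) = (if r j \<le> r i then A (j,i) else A (i,j))" for i j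
    proof (cases "i = j")
      case True then show ?thesis by (simp only: if_True order_refl)
    next
      case False
      then have "r i \<noteq> r j" using r by blast
      then show ?thesis by (cases "r i \<le> r j") (simp_all add: not_le)
    qed
    have s2: "(if r i \<le> r j then A (j,i) else A (i,j)) = (if r j \<le> r i then A (i,j) else A (j,i))" for i j
    proof (cases "i = j")
      case True then show ?thesis by (simp only: if_True order_refl)
    next
      case False
      then have "r i \<noteq> r j" using r by blast
      then show ?thesis by (cases "r i \<le> r j") (simp_all add: not_le)
    qed
    have "fst (h A) \<in> sym_tensors" unfolding sym_tensors_def
    proof (intro CollectI allI)
      fix i j show "fst (h A) (i, j) = fst (h A) (j, i)" unfolding h_def fst_conv prod.case by (rule s1)
    qed
    moreover have "snd (h A) \<in> sym_tensors" unfolding sym_tensors_def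
    proof (intro CollectI allI)
      fix i j show "snd (h A) (i, j) = snd (h A) (j, i)" unfolding h_def snd_conv prod.case by (rule s2)
    qed
    ultimately show "T \<in> sym_tensors \<times> sym_tensors" unfolding T mem_Times_iff by (rule conjI)
  qed
  moreover have "finite ((sym_tensors :: ('d \<times> 'd \<Rightarrow> 'a) set) \<times> (sym_tensors :: ('d \<times> 'd \<Rightarrow> 'a) set))"
  proof -
    have fs: "finite (sym_tensors :: ('d \<times> 'd \<Rightarrow> 'a) set)" using finite_subset[OF subset_UNIV fin] .
    show ?thesis by (rule finite_cartesian_product[OF fs fs])
  qed
  ultimately have "card (UNIV :: ('d \<times> 'd \<Rightarrow> 'a) set) \<le> card ((sym_tensors :: ('d \<times> 'd \<Rightarrow> 'a) set) \<times> (sym_tensors :: ('d \<times> 'd \<Rightarrow> 'a) set))"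
    by (rule card_inj_on_le)
  then show ?thesis by (simp only: card_cartesian_product)
qed

lemma cj_sum:
  assumes "\<forall>x y::'a::field. (x+y)^q = x^q + y^q" "q > 0"
  shows "(sum f A :: 'a)^q = sum (\<lambda>i. (f i)^q) A"
  by (induction A rule: infinite_finite_induct) (simp_all add: assms)

definition P0 :: "nat \<Rightarrow> (nat \<Rightarrow> 'a::zero) set" where
  "P0 n = {c. \<forall>k\<ge>n. c k = 0}"

lemma card_P0': "card (P0 n :: (nat \<Rightarrow> 'a::zero) set) = card (UNIV::'a set) ^ n"
  unfolding P0_def by (rule card_P0)

context
  fixes q n :: nat and a c2 :: "'a::field" and x :: "nat \<Rightarrow> ('d::finite \<Rightarrow> 'a)"
  assumes q0: "q > 0" and tf2: "tight_frame q c2 n (\<lambda>k. tensor2 (x k)) sym_tensors"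
    and norm: "\<forall>k<n. hinner q (x k) (x k) = a" and n0: "n > 0"
    and finM: "finite (UNIV :: ('d \<times> 'd \<Rightarrow> 'a) set)"
    and finP: "finite (P0 n :: (nat \<Rightarrow> 'a) set)"
begin

definition fk :: "nat \<Rightarrow> ('d \<times> 'd \<Rightarrow> 'a) \<Rightarrow> 'a" where
  "fk k A = (\<Sum>l\<in>UNIV. \<Sum>j\<in>UNIV. conj_q q (x k l) * A (l,j) * x k j)"

definition trc :: "('d \<times> 'd \<Rightarrow> 'a) \<Rightarrow> 'a" where
  "trc A = (\<Sum>l\<in>UNIV. A (l,l))"

lemma Iid: "2 * (\<Sum>k<n. fk k A * (x k i * conj_q q (x k m))) = c2 * (A (i,m) + (if i = m then trc A else 0))"
  unfolding fk_def trc_def by (rule I_ident[OF q0 tf2])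

lemma fk_diff: "fk k (\<lambda>p. A p - B p) = fk k A - fk k B"
  unfolding fk_def by (simp add: right_diff_distrib left_diff_distrib sum_subtractf)

lemma a_def0: "(\<Sum>l\<in>UNIV. conj_q q (x 0 l) * x 0 l) = a"
  using norm n0 unfolding hinner_def by auto

lemma case_a_nonzero:
  assumes c2: "c2 \<noteq> 0" and a: "a \<noteq> 0"
  shows "card (UNIV :: ('d \<times> 'd \<Rightarrow> 'a) set) \<le> card (P0 n :: (nat \<Rightarrow> 'a) set)"
proof -
  define g where "g = (\<lambda>A k. if k < n then fk k A else 0)"
  have "inj_on g UNIV"
  proof (rule inj_onI)
    fix A B assume eq: "g A = g B"
    define C where "C = (\<lambda>p. A p - B p)"
    have fC: "fk k C = 0" if "k < n" for k
    proof -
      have "fk k A = fk k B" using fun_cong[OF eq, of k] that by (simp add: g_def)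
      then show ?thesis unfolding C_def fk_diff by simp
    qed
    define t where "t = trc C"
    have Cf: "C (i,m) = - (if i = m then t else 0)" for i m
    proof -
      have "2 * (\<Sum>k<n. fk k C * (x k i * conj_q q (x k m))) = 0"
        using fC by simp
      then have "c2 * (C (i,m) + (if i = m then t else 0)) = 0"
        unfolding t_def using Iid[of C i m] by simp
      then have "C (i,m) + (if i = m then t else 0) = 0" using c2 by simp
      then show ?thesis by (simp add: eq_neg_iff_add_eq_0)
    qed
    have "fk 0 C = (\<Sum>l\<in>UNIV. \<Sum>j\<in>UNIV. conj_q q (x 0 l) * (- (if l = j then t else 0)) * x 0 j)"
      unfolding fk_def by (simp only: Cf)
    also have "\<dots> = (\<Sum>l\<in>UNIV. - (t * (conj_q q (x 0 l) * x 0 l)))"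
    proof (rule sum.cong[OF refl])
      fix l
      have "(\<Sum>j\<in>UNIV. conj_q q (x 0 l) * (- (if l = j then t else 0)) * x 0 j)
          = (\<Sum>j\<in>UNIV. if l = j then - (t * (conj_q q (x 0 l) * x 0 j)) else 0)"
        by (rule sum.cong[OF refl]) simp
      also have "\<dots> = - (t * (conj_q q (x 0 l) * x 0 l))" by simp
      finally show "(\<Sum>j\<in>UNIV. conj_q q (x 0 l) * (- (if l = j then t else 0)) * x 0 j) = - (t * (conj_q q (x 0 l) * x 0 l))" .
    qed
    also have "\<dots> = - (t * a)"
      by (simp only: sum_negf sum_distrib_left[symmetric] a_def0)
    finally have "fk 0 C = - (t * a)" .
    then have "t * a = 0" using fC[OF n0] by simp
    then have t0: "t = 0" using a by simp
    have "C = (\<lambda>_. 0)"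
    proof
      fix p :: "'d \<times> 'd"
      obtain i m where "p = (i,m)" by (cases p) blast
      then show "C p = 0" using Cf[of i m] t0 by simp
    qed
    show "A = B"
    proof
      fix p show "A p = B p" using fun_cong[OF \<open>C = (\<lambda>_. 0)\<close>, of p] unfolding C_def by simp
    qed
  qed
  moreover have "g ` UNIV \<subseteq> P0 n" by (auto simp: g_def P0_def)
  ultimately show ?thesis using finP by (rule card_inj_on_le)
qed


definition Xi :: "(nat \<Rightarrow> 'a) \<Rightarrow> ('d \<times> 'd \<Rightarrow> 'a)" where
  "Xi c = (\<lambda>(i,m). \<Sum>k<n. c k * (x k i * conj_q q (x k m)))"

lemma Xi_lin: "Xi (\<lambda>k. u k + s * v k) = (\<lambda>p. Xi u p + s * Xi v p)"
proof
  fix p :: "'d \<times> 'd"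
  obtain i m where p: "p = (i,m)" by (cases p) blast
  have "(\<Sum>k<n. (u k + s * v k) * (x k i * conj_q q (x k m)))
      = (\<Sum>k<n. u k * (x k i * conj_q q (x k m))) + s * (\<Sum>k<n. v k * (x k i * conj_q q (x k m)))"
    by (simp add: sum.distrib sum_distrib_left distrib_right mult.assoc)
  then show "Xi (\<lambda>k. u k + s * v k) p = Xi u p + s * Xi v p"
    unfolding Xi_def p by simp
qed

lemma case_a_zero:
  assumes c2: "c2 \<noteq> 0" and a: "a = 0"
  shows "card (UNIV :: ('d \<times> 'd \<Rightarrow> 'a) set) \<le> card (P0 n :: (nat \<Rightarrow> 'a) set)"
proof -
  define tz where "tz = {A :: 'd \<times> 'd \<Rightarrow> 'a. trc A = 0}"
  define pre where "pre = (\<lambda>B k. if k < n then 2 / c2 * fk k B else 0)"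
  have pre_ok: "Xi (pre B) = B" if B: "B \<in> tz" for B
  proof
    fix p :: "'d \<times> 'd"
    obtain i m where p: "p = (i,m)" by (cases p) blast
    have tB: "trc B = 0" using B unfolding tz_def by simp
    have "(\<Sum>k<n. pre B k * (x k i * conj_q q (x k m))) = (\<Sum>k<n. (2 / c2 * fk k B) * (x k i * conj_q q (x k m)))"
      by (rule sum.cong[OF refl]) (simp add: pre_def)
    also have "\<dots> = (1 / c2) * (2 * (\<Sum>k<n. fk k B * (x k i * conj_q q (x k m))))"
      unfolding sum_distrib_left by (rule sum.cong[OF refl]) simp
    also have "\<dots> = (1 / c2) * (c2 * B (i,m))" using Iid[of B i m] tB by simp
    also have "\<dots> = B (i,m)" using c2 by simp
    finally show "Xi (pre B) p = B p" unfolding Xi_def p by simp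
  qed
  define M0 where "M0 = (\<lambda>(i::'d, m::'d). x 0 i * conj_q q (x 0 m))"
  have trM0: "trc M0 = 0"
  proof -
    have "trc M0 = (\<Sum>l\<in>UNIV. conj_q q (x 0 l) * x 0 l)" unfolding trc_def M0_def by (simp add: mult.commute)
    then show ?thesis using a_def0 a by simp
  qed
  have fM0: "fk 0 M0 = 0"
  proof -
    have "fk 0 M0 = (\<Sum>l\<in>UNIV. \<Sum>j\<in>UNIV. (conj_q q (x 0 l) * x 0 l) * (conj_q q (x 0 j) * x 0 j))"
      unfolding fk_def M0_def by (simp add: mult_ac)
    also have "\<dots> = (\<Sum>l\<in>UNIV. conj_q q (x 0 l) * x 0 l) * (\<Sum>j\<in>UNIV. conj_q q (x 0 j) * x 0 j)"
      by (simp only: sum_product)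
    finally show ?thesis using a_def0 a by simp
  qed
  define kap where "kap = (\<lambda>k. if k < n then 2 * fk k M0 - (if k = 0 then c2 else 0) else 0)"
  have kap0: "kap 0 = - c2" using n0 fM0 by (simp add: kap_def)
  have Xkap: "Xi kap = (\<lambda>_. 0)"
  proof
    fix p :: "'d \<times> 'd"
    obtain i m where p: "p = (i,m)" by (cases p) blast
    have "(\<Sum>k<n. kap k * (x k i * conj_q q (x k m)))
        = (\<Sum>k<n. 2 * (fk k M0 * (x k i * conj_q q (x k m))) - (if k = 0 then c2 * (x k i * conj_q q (x k m)) else 0))"
      by (rule sum.cong[OF refl]) (simp add: kap_def algebra_simps)
    also have "\<dots> = 2 * (\<Sum>k<n. fk k M0 * (x k i * conj_q q (x k m))) - c2 * (x 0 i * conj_q q (x 0 m))"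
      using n0 by (simp add: sum_subtractf sum_distrib_left)
    also have "\<dots> = c2 * (M0 (i,m) + (if i = m then trc M0 else 0)) - c2 * M0 (i,m)"
      unfolding Iid by (simp add: M0_def)
    also have "\<dots> = 0" using trM0 by simp
    finally show "Xi kap p = 0" unfolding Xi_def p by simp
  qed
  define hm where "hm = (\<lambda>(B, s). \<lambda>k. pre B k + s * kap k)"
  have "inj_on hm (tz \<times> UNIV)"
  proof (rule inj_onI)
    fix u v assume u: "u \<in> tz \<times> UNIV" and v: "v \<in> tz \<times> UNIV" and e: "hm u = hm v"
    obtain B s where us: "u = (B, s)" by (cases u) blast
    obtain B' s' where vs: "v = (B', s')" by (cases v) blast
    have B: "B \<in> tz" and B': "B' \<in> tz" using u v us vs by auto
    have e': "(\<lambda>k. pre B k + s * kap k) = (\<lambda>k. pre B' k + s' * kap k)"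
      using e unfolding hm_def us vs by simp
    have "Xi (\<lambda>k. pre B k + s * kap k) = B"
      unfolding Xi_lin pre_ok[OF B] Xkap by simp
    moreover have "Xi (\<lambda>k. pre B' k + s' * kap k) = B'"
      unfolding Xi_lin pre_ok[OF B'] Xkap by simp
    ultimately have BB: "B = B'" using e' by simp
    have "s * kap 0 = s' * kap 0" using fun_cong[OF e', of 0] BB by simp
    then have "s = s'" using kap0 c2 by simp
    then show "u = v" using us vs BB by simp
  qed
  moreover have "hm ` (tz \<times> UNIV) \<subseteq> P0 n"
    by (auto simp: hm_def pre_def kap_def P0_def)
  ultimately have c1: "card (tz \<times> (UNIV :: 'a set)) \<le> card (P0 n :: (nat \<Rightarrow> 'a) set)"
    using finP by (rule card_inj_on_le)
  define i0 :: 'd where "i0 = undefined"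
  define e where "e = (\<lambda>A :: 'd \<times> 'd \<Rightarrow> 'a. ((\<lambda>p. A p - (if p = (i0,i0) then trc A else 0)), trc A))"
  have "inj_on e UNIV"
  proof (rule inj_onI)
    fix A B assume eq: "e A = e B"
    then have t: "trc A = trc B" unfolding e_def by simp
    show "A = B"
    proof
      fix p show "A p = B p" using fun_cong[OF arg_cong[OF eq, of fst], of p] t unfolding e_def by (auto split: if_splits)
    qed
  qed
  moreover have "e ` UNIV \<subseteq> tz \<times> UNIV"
  proof
    fix T assume "T \<in> e ` UNIV"
    then obtain A where T: "T = e A" by blast
    have "trc (\<lambda>p. A p - (if p = (i0,i0) then trc A else 0)) = trc A - trc A"
      unfolding trc_def by (simp add: sum_subtractf)
    then show "T \<in> tz \<times> UNIV" unfolding T e_def tz_def by simp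
  qed
  moreover have "finite (tz \<times> (UNIV :: 'a set))"
  proof -
    have "finite tz" using finite_subset[OF subset_UNIV finM] unfolding tz_def .
    moreover have "finite (UNIV :: 'a set)"
    proof -
      have "finite ((\<lambda>A. A (i0,i0)) ` (UNIV :: ('d \<times> 'd \<Rightarrow> 'a) set))" using finM by simp
      moreover have "(\<lambda>A. A (i0,i0)) ` (UNIV :: ('d \<times> 'd \<Rightarrow> 'a) set) = UNIV"
        by (auto intro!: image_eqI[where x="\<lambda>_. _"])
      ultimately show ?thesis by simp
    qed
    ultimately show ?thesis by (rule finite_cartesian_product)
  qed
  ultimately have "card (UNIV :: ('d \<times> 'd \<Rightarrow> 'a) set) \<le> card (tz \<times> (UNIV :: 'a set))"
    by (rule card_inj_on_le)
  then show ?thesis using c1 by simp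
qed

lemma case_c2_zero:
  assumes c2: "c2 = 0" and add: "\<forall>u v::'a. (u + v) ^ q = u ^ q + v ^ q" and two: "(2::'a) \<noteq> 0"
  shows "card (UNIV :: ('d \<times> 'd \<Rightarrow> 'a) set) \<le> card (P0 n :: (nat \<Rightarrow> 'a) set)"
proof -
  define t where "t = (\<lambda>k. tensor2 (x k))"
  define Phi where "Phi = (\<lambda>(c::nat \<Rightarrow> 'a) (p::'d \<times> 'd). \<Sum>k<n. c k * t k p)"
  have Phi_lin: "Phi (\<lambda>k. u k + v k) = (\<lambda>p. Phi u p + Phi v p)" for u v
    unfolding Phi_def by (simp add: sum.distrib distrib_right)
  have tfs: "fam_span n t = sym_tensors" and tfr: "\<forall>T\<in>sym_tensors. (\<lambda>ij. \<Sum>k<n. hinner q (t k) T * t k ij) = (\<lambda>ij. c2 * T ij)"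
    using tf2 unfolding tight_frame_def t_def by blast+
  have surj: "\<exists>c\<in>P0 n. Phi c = T" if T: "T \<in> sym_tensors" for T
  proof -
    from T tfs obtain c where c: "T = (\<lambda>i. \<Sum>k<n. c k * t k i)" unfolding fam_span_def by blast
    define c' where "c' = (\<lambda>k. if k < n then c k else 0)"
    have "c' \<in> P0 n" unfolding c'_def P0_def by simp
    moreover have "Phi c' = T" unfolding c Phi_def c'_def by (intro ext sum.cong) auto
    ultimately show ?thesis by blast
  qed
  then obtain pre where pre: "\<And>T. T \<in> sym_tensors \<Longrightarrow> pre T \<in> P0 n \<and> Phi (pre T) = T"
    by metis
  define K where "K = {c \<in> P0 n. Phi c = (\<lambda>_. 0)}"
  define Psi where "Psi = (\<lambda>T k. if k < n then hinner q (t k) T else 0)"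
  have cj0: "conj_q q 0 = (0::'a)" and cj1: "conj_q q 1 = (1::'a)"
    using q0 unfolding conj_q_def by simp_all
  have cjsum: "conj_q q (\<Sum>k<n. c k * t k p) = (\<Sum>k<n. conj_q q (c k) * conj_q q (t k p))" for c p
    unfolding conj_q_def by (simp add: cj_sum[OF add q0] power_mult_distrib)
  have "inj_on Psi sym_tensors"
  proof (rule inj_onI)
    fix T T' assume T: "T \<in> sym_tensors" and T': "T' \<in> sym_tensors" and e: "Psi T = Psi T'"
    define C where "C = (\<lambda>p. T p - T' p)"
    have Csym: "C (i,j) = C (j,i)" for i j using T T' unfolding C_def sym_tensors_def by simp
    have hC: "hinner q (t k) C = 0" if k: "k < n" for k
    proof -
      have "hinner q (t k) T = hinner q (t k) T'" using fun_cong[OF e, of k] k by (simp add: Psi_def)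
      moreover have "hinner q (t k) C = hinner q (t k) T - hinner q (t k) T'"
        unfolding hinner_def C_def by (simp add: right_diff_distrib sum_subtractf)
      ultimately show ?thesis by simp
    qed
    have orth: "(\<Sum>p\<in>UNIV. conj_q q (S p) * C p) = 0" if S: "S \<in> sym_tensors" for S
    proof -
      obtain c where "c \<in> P0 n" and Sc: "Phi c = S" using pre[OF S] by blast
      have "(\<Sum>p\<in>UNIV. conj_q q (S p) * C p) = (\<Sum>p\<in>UNIV. (\<Sum>k<n. conj_q q (c k) * conj_q q (t k p)) * C p)"
        unfolding Sc[symmetric] Phi_def cjsum by (rule refl)
      also have "\<dots> = (\<Sum>p\<in>UNIV. \<Sum>k<n. conj_q q (c k) * (conj_q q (t k p) * C p))"
        by (simp add: sum_distrib_right mult.assoc)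
      also have "\<dots> = (\<Sum>k<n. \<Sum>p\<in>UNIV. conj_q q (c k) * (conj_q q (t k p) * C p))"
        by (rule sum.swap)
      also have "\<dots> = (\<Sum>k<n. conj_q q (c k) * hinner q (t k) C)"
        unfolding hinner_def by (simp add: sum_distrib_left)
      also have "\<dots> = 0" using hC by simp
      finally show ?thesis .
    qed
    have "C = (\<lambda>_. 0)"
    proof
      fix p :: "'d \<times> 'd"
      obtain i j where p: "p = (i,j)" by (cases p) blast
      define v :: "'d\<times>'d \<Rightarrow> 'a" where "v = (\<lambda>p. (if p = (i,j) then 1 else 0) + (if p = (j,i) then 1 else 0))"
      have "v (i',j') = v (j',i')" for i' j'
        unfolding v_def by (cases "i' = i"; cases "j' = j"; cases "i' = j"; cases "j' = i") simp_all
      then have vs: "v \<in> sym_tensors" unfolding sym_tensors_def by blast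
      have cj_ind: "conj_q q (if P then 1 else 0) = (if P then 1 else (0::'a))" for P
        by (cases P) (simp_all add: cj0 cj1)
      have cv: "conj_q q (v p') = v p'" for p'
      proof -
        have "conj_q q (v p') = conj_q q (if p' = (i,j) then 1 else 0) + conj_q q (if p' = (j,i) then 1 else 0)"
          unfolding v_def conj_q_def using add by simp
        also have "\<dots> = v p'" unfolding v_def cj_ind by (rule refl)
        finally show ?thesis .
      qed
      have "(\<Sum>p\<in>UNIV. conj_q q (v p) * C p) = (\<Sum>p\<in>UNIV. (if p = (i,j) then C p else 0) + (if p = (j,i) then C p else 0))"
        unfolding cv unfolding v_def distrib_right mult_delta_left by (rule refl)
      also have "\<dots> = C (i,j) + C (j,i)" by (simp add: sum.distrib)
      also have "\<dots> = 2 * C (i,j)" using Csym[of i j] by simp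
      finally have "2 * C (i,j) = 0" using orth[OF vs] by simp
      then show "C p = 0" using two p by simp
    qed
    then show "T = T'"
    proof -
      assume C0: "C = (\<lambda>_. 0)"
      show "T = T'"
      proof
        fix p show "T p = T' p" using fun_cong[OF C0, of p] unfolding C_def by simp
      qed
    qed
  qed
  moreover have "Psi ` sym_tensors \<subseteq> K"
  proof
    fix c assume "c \<in> Psi ` sym_tensors"
    then obtain T where T: "T \<in> sym_tensors" and c: "c = Psi T" by blast
    have "c \<in> P0 n" unfolding c Psi_def P0_def by simp
    moreover have "Phi c = (\<lambda>_. 0)"
    proof
      fix p
      have "Phi c p = (\<Sum>k<n. hinner q (t k) T * t k p)"
        unfolding c Phi_def Psi_def by (rule sum.cong[OF refl]) simp
      also have "\<dots> = c2 * T p" using fun_cong[OF tfr[rule_format, OF T], of p] by simp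
      finally show "Phi c p = 0" using c2 by simp
    qed
    ultimately show "c \<in> K" unfolding K_def by blast
  qed
  moreover have finK: "finite K" using finite_subset[OF _ finP, of K] unfolding K_def by blast
  ultimately have c1: "card (sym_tensors :: ('d \<times> 'd \<Rightarrow> 'a) set) \<le> card K"
    by (rule card_inj_on_le)
  define hm where "hm = (\<lambda>(kp :: nat \<Rightarrow> 'a, T :: 'd \<times> 'd \<Rightarrow> 'a). \<lambda>k. kp k + pre T k)"
  have "inj_on hm (K \<times> sym_tensors)"
  proof (rule inj_onI)
    fix u v assume u: "u \<in> K \<times> sym_tensors" and v: "v \<in> K \<times> sym_tensors" and e: "hm u = hm v"
    obtain kp T where us: "u = (kp, T)" by (cases u) blast
    obtain kp' T' where vs: "v = (kp', T')" by (cases v) blast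
    have kp: "kp \<in> K" and T: "T \<in> sym_tensors" and kp': "kp' \<in> K" and T': "T' \<in> sym_tensors"
      using u v us vs by auto
    have e': "(\<lambda>k. kp k + pre T k) = (\<lambda>k. kp' k + pre T' k)"
      using e unfolding hm_def us vs by simp
    have "Phi (\<lambda>k. kp k + pre T k) = T"
      using kp pre[OF T] unfolding Phi_lin K_def by simp
    moreover have "Phi (\<lambda>k. kp' k + pre T' k) = T'"
      using kp' pre[OF T'] unfolding Phi_lin K_def by simp
    ultimately have TT: "T = T'" using e' by simp
    have "kp = kp'"
    proof
      fix k show "kp k = kp' k" using fun_cong[OF e', of k] TT by simp
    qed
    then show "u = v" using us vs TT by simp
  qed
  moreover have "hm ` (K \<times> sym_tensors) \<subseteq> P0 n"
  proof
    fix c assume "c \<in> hm ` (K \<times> sym_tensors)"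
    then obtain kp T where kp: "kp \<in> K" and T: "T \<in> sym_tensors" and c: "c = hm (kp, T)" by blast
    have "kp \<in> P0 n" "pre T \<in> P0 n" using kp pre[OF T] unfolding K_def by auto
    then show "c \<in> P0 n" unfolding c hm_def P0_def by simp
  qed
  ultimately have c2': "card (K \<times> (sym_tensors :: ('d \<times> 'd \<Rightarrow> 'a) set)) \<le> card (P0 n :: (nat \<Rightarrow> 'a) set)"
    using finP by (rule card_inj_on_le)
  have "card (UNIV :: ('d \<times> 'd \<Rightarrow> 'a) set) \<le> card (sym_tensors :: ('d \<times> 'd \<Rightarrow> 'a) set) * card (sym_tensors :: ('d \<times> 'd \<Rightarrow> 'a) set)"
    by (rule sym_sq[OF finM])
  also have "\<dots> \<le> card K * card (sym_tensors :: ('d \<times> 'd \<Rightarrow> 'a) set)"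
    using c1 by (rule mult_le_mono1)
  also have "\<dots> = card (K \<times> (sym_tensors :: ('d \<times> 'd \<Rightarrow> 'a) set))" by (simp add: card_cartesian_product)
  also have "\<dots> \<le> card (P0 n :: (nat \<Rightarrow> 'a) set)" by (rule c2')
  finally show ?thesis .
qed

end

theorem mainTheorem7:
  fixes q n :: nat and a c1 c2 :: "'a::field"
    and x :: "nat \<Rightarrow> ('d::finite \<Rightarrow> 'a)"
  assumes "\<exists>p m. prime p \<and> m > 0 \<and> q = p ^ m"
    and "odd q"
    and "card (UNIV :: 'a set) = q ^ 2"
    and "projective_2_design q a c1 c2 n x"
  shows "n \<ge> card (UNIV :: 'd set) ^ 2"
proof -
  obtain p m where pm: "prime p" "m > 0" "q = p ^ m" using assms(1) by blast
  have q1: "1 < q" unfolding pm(3) by (rule one_less_power) (use pm prime_gt_1_nat in auto)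
  then have q0: "q > 0" by simp
  have D1: "1 < card (UNIV :: 'a set)" unfolding assms(3) by (rule one_less_power) (use q1 in auto)
  have cardM: "card (UNIV :: ('d \<times> 'd \<Rightarrow> 'a) set) = card (UNIV :: 'a set) ^ (card (UNIV :: 'd set) ^ 2)"
    by (rule card_mat)
  have finM: "finite (UNIV :: ('d \<times> 'd \<Rightarrow> 'a) set)"
    by (rule finite_of_card_pos) (use cardM D1 in simp)
  have cardP: "card (P0 n :: (nat \<Rightarrow> 'a) set) = card (UNIV :: 'a set) ^ n" by (rule card_P0')
  have finP: "finite (P0 n :: (nat \<Rightarrow> 'a) set)"
    by (rule finite_of_card_pos) (use cardP D1 in simp)
  have norm: "\<forall>k<n. hinner q (x k) (x k) = a" and tf1: "tight_frame q c1 n x UNIV"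
    and tf2: "tight_frame q c2 n (\<lambda>k. tensor2 (x k)) sym_tensors"
    using assms(4) unfolding projective_2_design_def by blast+
  have n0: "n > 0"
  proof (rule ccontr)
    assume "\<not> n > 0"
    then have n: "n = 0" by simp
    have "fam_span n x = UNIV" using tf1 unfolding tight_frame_def by blast
    then have "(\<lambda>_::'d. 1::'a) \<in> fam_span n x" by simp
    then obtain c :: "nat \<Rightarrow> 'a" where "(\<lambda>_::'d. 1::'a) = (\<lambda>i. \<Sum>k<n. c k * x k i)"
      unfolding fam_span_def by blast
    from fun_cong[OF this, of undefined] show False using n by simp
  qed
  have key: "card (UNIV :: ('d \<times> 'd \<Rightarrow> 'a) set) \<le> card (P0 n :: (nat \<Rightarrow> 'a) set)"
  proof (cases "c2 = 0")
    case True
    have cf: "\<forall>x y::'a. (x + y) ^ q = x ^ q + y ^ q" "(2::'a) \<noteq> 0"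
      using char_facts[OF assms(1,2,3)] by blast+
    show ?thesis by (rule case_c2_zero[OF q0 tf2 norm n0 finM finP True cf])
  next
    case False
    show ?thesis
    proof (cases "a = 0")
      case True
      show ?thesis by (rule case_a_zero[OF q0 tf2 norm n0 finM finP False True])
    next
      case a: False
      show ?thesis by (rule case_a_nonzero[OF q0 tf2 norm n0 finM finP False a])
    qed
  qed
  then have "card (UNIV :: 'a set) ^ (card (UNIV :: 'd set) ^ 2) \<le> card (UNIV :: 'a set) ^ n"
    using cardM cardP by simp
  then show ?thesis by (rule power_le_imp_le_exp[OF D1])
qed

end
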